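(* Let $\mathbf{A}$ be an affine algebra such that $\mathbf{A}^2$ is finitely generated. Then $d_{\mathbf{A}}(n)\in O(n)$. If, moreover, $\mathbf{A}$ is finite and has more than one element, then $d_{\mathbf{A}}(n)\in \Theta(n)$.
   Context: An algebra is affine if it is polynomially equivalent to a module. For an algebra $\mathbf{A}$ and $n\in\omega$, $d_{\mathbf{A}}(n)$ is the least size of a generating set of the direct power $\mathbf{A}^n$. Standard Big-O and Big-Theta notation is used. *)

theory Defs
  imports "HOL-Algebra.Module" "HOL-Library.Landau_Symbols"
begin

text \<open>An algebra is a carrier set A together with a set F of fundamental
operations; each operation is a pair (k, f) with k its arity and f acting on
argument lists of length k. Only the values of f on lists of length k over A
matter.\<close>

definition is_algebra :: "'a set \<Rightarrow> (nat \<times> ('a list \<Rightarrow> 'a)) set \<Rightarrow> bool" where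
  "is_algebra A F \<longleftrightarrow> A \<noteq> {} \<and>
     (\<forall>(k, f) \<in> F. \<forall>xs. length xs = k \<and> set xs \<subseteq> A \<longrightarrow> f xs \<in> A)"

inductive_set Sg :: "(nat \<times> ('a list \<Rightarrow> 'a)) set \<Rightarrow> 'a set \<Rightarrow> 'a set"
  for F X where
  gen: "x \<in> X \<Longrightarrow> x \<in> Sg F X"
| app: "(k, f) \<in> F \<Longrightarrow> length xs = k \<Longrightarrow> \<forall>x \<in> set xs. x \<in> Sg F X \<Longrightarrow> f xs \<in> Sg F X"

definition generates :: "'a set \<Rightarrow> (nat \<times> ('a list \<Rightarrow> 'a)) set \<Rightarrow> 'a set \<Rightarrow> bool" where
  "generates A F X \<longleftrightarrow> X \<subseteq> A \<and> Sg F X = A"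

definition finitely_generated :: "'a set \<Rightarrow> (nat \<times> ('a list \<Rightarrow> 'a)) set \<Rightarrow> bool" where
  "finitely_generated A F \<longleftrightarrow> (\<exists>X. finite X \<and> generates A F X)"

definition pow_carrier :: "'a set \<Rightarrow> nat \<Rightarrow> 'a list set" where
  "pow_carrier A n = {xs. length xs = n \<and> set xs \<subseteq> A}"

definition pow_ops :: "(nat \<times> ('a list \<Rightarrow> 'a)) set \<Rightarrow> nat \<Rightarrow> (nat \<times> ('a list list \<Rightarrow> 'a list)) set" where
  "pow_ops F n = (\<lambda>(k, f). (k, \<lambda>args. map (\<lambda>i. f (map (\<lambda>v. v ! i) args)) [0..<n])) ` F"

definition d_gen :: "'a set \<Rightarrow> (nat \<times> ('a list \<Rightarrow> 'a)) set \<Rightarrow> nat \<Rightarrow> nat" where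
  "d_gen A F n = (LEAST m. \<exists>X. finite X \<and> card X = m \<and> generates (pow_carrier A n) (pow_ops F n) X)"

inductive_set Pol :: "'a set \<Rightarrow> (nat \<times> ('a list \<Rightarrow> 'a)) set \<Rightarrow> nat \<Rightarrow> ('a list \<Rightarrow> 'a) set"
  for A F k where
  proj: "i < k \<Longrightarrow> (\<lambda>xs. xs ! i) \<in> Pol A F k"
| const: "c \<in> A \<Longrightarrow> (\<lambda>xs. c) \<in> Pol A F k"
| comp: "(m, f) \<in> F \<Longrightarrow> length gs = m \<Longrightarrow> \<forall>g \<in> set gs. g \<in> Pol A F k \<Longrightarrow>
           (\<lambda>xs. f (map (\<lambda>g. g xs) gs)) \<in> Pol A F k"

definition poly_equivalent :: "'a set \<Rightarrow> (nat \<times> ('a list \<Rightarrow> 'a)) set \<Rightarrow> (nat \<times> ('a list \<Rightarrow> 'a)) set \<Rightarrow> bool" where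
  "poly_equivalent A F G \<longleftrightarrow>
     (\<forall>k. (\<lambda>p. restrict p (pow_carrier A k)) ` Pol A F k
        = (\<lambda>p. restrict p (pow_carrier A k)) ` Pol A G k)"

text \<open>Left R-module, R a ring with identity (HOL-Algebra's locale module
requires a commutative ring, so we state the axioms over an arbitrary ring).\<close>
definition ring_module :: "('r, 'c) ring_scheme \<Rightarrow> ('r, 'a, 'd) module_scheme \<Rightarrow> bool" where
  "ring_module R M \<longleftrightarrow> ring R \<and> abelian_group M \<and>
    (\<forall>a \<in> carrier R. \<forall>x \<in> carrier M. a \<odot>\<^bsub>M\<^esub> x \<in> carrier M) \<and>
    (\<forall>a \<in> carrier R. \<forall>b \<in> carrier R. \<forall>x \<in> carrier M.
        (a \<oplus>\<^bsub>R\<^esub> b) \<odot>\<^bsub>M\<^esub> x = a \<odot>\<^bsub>M\<^esub> x \<oplus>\<^bsub>M\<^esub> b \<odot>\<^bsub>M\<^esub> x) \<and>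
    (\<forall>a \<in> carrier R. \<forall>x \<in> carrier M. \<forall>y \<in> carrier M.
        a \<odot>\<^bsub>M\<^esub> (x \<oplus>\<^bsub>M\<^esub> y) = a \<odot>\<^bsub>M\<^esub> x \<oplus>\<^bsub>M\<^esub> a \<odot>\<^bsub>M\<^esub> y) \<and>
    (\<forall>a \<in> carrier R. \<forall>b \<in> carrier R. \<forall>x \<in> carrier M.
        (a \<otimes>\<^bsub>R\<^esub> b) \<odot>\<^bsub>M\<^esub> x = a \<odot>\<^bsub>M\<^esub> (b \<odot>\<^bsub>M\<^esub> x)) \<and>
    (\<forall>x \<in> carrier M. \<one>\<^bsub>R\<^esub> \<odot>\<^bsub>M\<^esub> x = x)"

definition module_ops :: "('r, 'c) ring_scheme \<Rightarrow> ('r, 'a, 'd) module_scheme \<Rightarrow> (nat \<times> ('a list \<Rightarrow> 'a)) set" where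
  "module_ops R M =
     {(2, \<lambda>xs. xs ! 0 \<oplus>\<^bsub>M\<^esub> xs ! 1), (1, \<lambda>xs. \<ominus>\<^bsub>M\<^esub> (xs ! 0)), (0, \<lambda>xs. \<zero>\<^bsub>M\<^esub>)}
     \<union> {(1, \<lambda>xs. r \<odot>\<^bsub>M\<^esub> (xs ! 0)) | r. r \<in> carrier R}"

definition poly_equiv_to_module :: "'a set \<Rightarrow> (nat \<times> ('a list \<Rightarrow> 'a)) set \<Rightarrow>
    ('r, 'c) ring_scheme \<Rightarrow> ('r, 'a, 'd) module_scheme \<Rightarrow> bool" where
  "poly_equiv_to_module A F R M \<longleftrightarrow>
     ring_module R M \<and> carrier M = A \<and> poly_equivalent A F (module_ops R M)"

end

theory Submission
  imports Defs
begin


lemma pow_ops_mem: "(k,f) \<in> F \<Longrightarrow> (k, \<lambda>args. map (\<lambda>i. f (map (\<lambda>v. v!i) args)) [0..<n]) \<in> pow_ops F n"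
  unfolding pow_ops_def by (rule image_eqI[where x="(k,f)"]) auto
lemma pow_ops_E: "(k,f') \<in> pow_ops F n \<Longrightarrow> (\<And>f. (k,f) \<in> F \<Longrightarrow> f' = (\<lambda>args. map (\<lambda>i. f (map (\<lambda>v. v!i) args)) [0..<n]) \<Longrightarrow> P) \<Longrightarrow> P"
  unfolding pow_ops_def by auto
lemma alg_closed: "is_algebra A F \<Longrightarrow> (k,f) \<in> F \<Longrightarrow> length xs = k \<Longrightarrow> set xs \<subseteq> A \<Longrightarrow> f xs \<in> A"
  unfolding is_algebra_def by blast

lemma Sg_mono: "x \<in> Sg F X \<Longrightarrow> X \<subseteq> Y \<Longrightarrow> x \<in> Sg F Y"
  by (induction rule: Sg.induct) (auto intro: Sg.intros)

lemma Sg_hom: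
  assumes h: "\<And>k f args. (k,f) \<in> F \<Longrightarrow>
     h (map (\<lambda>i. f (map (\<lambda>v. v!i) args)) [0..<a]) = map (\<lambda>i. f (map (\<lambda>v. v!i) (map h args))) [0..<b]"
  shows "x \<in> Sg (pow_ops F a) X \<Longrightarrow> h x \<in> Sg (pow_ops F b) (h ` X)"
proof (induction rule: Sg.induct)
  case (gen x) then show ?case by (auto intro: Sg.gen)
next
  case (app k f' xs)
  from app(1) obtain f where kf: "(k,f) \<in> F" and f': "f' = (\<lambda>args. map (\<lambda>i. f (map (\<lambda>v. v!i) args)) [0..<a])"
    by (rule pow_ops_E)
  have "map (\<lambda>i. f (map (\<lambda>v. v!i) (map h xs))) [0..<b] \<in> Sg (pow_ops F b) (h ` X)"
    by (rule Sg.app[OF pow_ops_mem[OF kf]]) (use app in auto)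
  then show ?case using h[OF kf] f' by simp
qed

lemma Sg_carrier:
  assumes alg: "is_algebra A F" and X: "X \<subseteq> pow_carrier A n"
  shows "x \<in> Sg (pow_ops F n) X \<Longrightarrow> x \<in> pow_carrier A n"
proof (induction rule: Sg.induct)
  case (gen x) then show ?case using X by auto
next
  case (app k f' xs)
  from app(1) obtain f where kf: "(k,f) \<in> F" and f': "f' = (\<lambda>args. map (\<lambda>i. f (map (\<lambda>v. v!i) args)) [0..<n])"
    by (rule pow_ops_E)
  have "f (map (\<lambda>v. v!i) xs) \<in> A" if "i < n" for i
  proof (rule alg_closed[OF alg kf])
    show "length (map (\<lambda>v. v!i) xs) = k" using app(2) by simp
    show "set (map (\<lambda>v. v!i) xs) \<subseteq> A"
    proof
      fix y assume "y \<in> set (map (\<lambda>v. v!i) xs)"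
      then obtain v where v: "v \<in> set xs" "y = v!i" by auto
      then have "length v = n" "set v \<subseteq> A" using app(3) unfolding pow_carrier_def by auto
      then show "y \<in> A" using that v nth_mem by blast
    qed
  qed
  then show ?case unfolding f' pow_carrier_def by auto
qed

lemma Pol_closed:
  assumes alg: "is_algebra A F" and X: "X \<subseteq> pow_carrier A n"
    and diag: "\<And>c. c \<in> A \<Longrightarrow> replicate n c \<in> Sg (pow_ops F n) X"
  shows "p \<in> Pol A F k \<Longrightarrow> length vs = k \<Longrightarrow> set vs \<subseteq> Sg (pow_ops F n) X \<Longrightarrow>
     map (\<lambda>j. p (map (\<lambda>v. v!j) vs)) [0..<n] \<in> Sg (pow_ops F n) X"
proof (induction p arbitrary: vs rule: Pol.induct)
  case (proj i)
  then have "vs!i \<in> Sg (pow_ops F n) X" by auto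
  moreover then have "length (vs!i) = n" using Sg_carrier[OF alg X] unfolding pow_carrier_def by auto
  moreover have "map ((!) (vs!i)) [0..<n] = vs!i" using calculation(2) map_nth by metis
  ultimately show ?case using proj by simp
next
  case (const c)
  then show ?case using diag[of c] by (simp add: map_replicate_const)
next
  case (comp m f gs)
  let ?args = "map (\<lambda>g. map (\<lambda>j. g (map (\<lambda>v. v!j) vs)) [0..<n]) gs"
  have SS: "map (\<lambda>i. f (map (\<lambda>v. v!i) ?args)) [0..<n] \<in> Sg (pow_ops F n) X"
  proof (rule Sg.app[OF pow_ops_mem[OF comp(1)]])
    show "length ?args = m" using comp(2) by simp
    show "\<forall>x\<in>set ?args. x \<in> Sg (pow_ops F n) X"
      using comp(3) comp.prems by auto
  qed
  have eq: "map (\<lambda>i. f (map (\<lambda>v. v!i) ?args)) [0..<n] = map (\<lambda>j. f (map (\<lambda>g. g (map (\<lambda>v. v!j) vs)) gs)) [0..<n]"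
    by (rule map_cong) (auto simp: comp_def)
  show ?case using SS unfolding eq .
qed



definition vadd :: "('a, 'm) ring_scheme \<Rightarrow> 'a list \<Rightarrow> 'a list \<Rightarrow> 'a list" where
  "vadd M xs ys = map2 (add M) xs ys"

lemma vadd_nth: "i < length xs \<Longrightarrow> i < length ys \<Longrightarrow> vadd M xs ys ! i = xs!i \<oplus>\<^bsub>M\<^esub> ys!i"
  unfolding vadd_def by simp
lemma vadd_len: "length (vadd M xs ys) = min (length xs) (length ys)"
  unfolding vadd_def by simp

context abelian_group begin
lemma id_plus: "a \<in> carrier G \<Longrightarrow> b \<in> carrier G \<Longrightarrow> c \<in> carrier G \<Longrightarrow> a' \<in> carrier G \<Longrightarrow> b' \<in> carrier G \<Longrightarrow> c' \<in> carrier G \<Longrightarrow>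
  (a \<oplus> b \<ominus> c) \<oplus> (a' \<oplus> b' \<ominus> c') = (a \<oplus> a') \<oplus> (b \<oplus> b') \<ominus> (c \<oplus> c')"
  by (simp add: a_minus_def minus_add a_ac)
lemma id_neg: "a \<in> carrier G \<Longrightarrow> b \<in> carrier G \<Longrightarrow> c \<in> carrier G \<Longrightarrow>
  \<ominus> (a \<oplus> b \<ominus> c) = \<ominus> a \<oplus> \<ominus> b \<ominus> \<ominus> c"
  by (simp add: a_minus_def minus_add a_ac)
lemma id_zero: "\<zero> = \<zero> \<oplus> \<zero> \<ominus> \<zero>"
proof -
  have e: "\<ominus> \<zero> = \<zero>" by (rule minus_equality) simp_all
  show ?thesis unfolding a_minus_def e by simp
qed
lemma a_closed': "a \<in> carrier G \<Longrightarrow> b \<in> carrier G \<Longrightarrow> a \<oplus> b \<in> carrier G" by simp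
lemma zero_closed': "\<zero> \<in> carrier G" by simp
lemma id_proj: "a \<in> carrier G \<Longrightarrow> b \<in> carrier G \<Longrightarrow> a \<oplus> b = a \<oplus> b \<ominus> \<zero>"
  by (simp add: a_minus_def)
lemma id_const: "c \<in> carrier G \<Longrightarrow> c = c \<oplus> c \<ominus> c"
  by (simp add: a_minus_def a_assoc r_neg)
end

lemma smult_aff:
  assumes rm: "ring_module R M" and r: "r \<in> carrier R" and abc: "a \<in> carrier M" "b \<in> carrier M" "c \<in> carrier M"
  shows "r \<odot>\<^bsub>M\<^esub> (a \<oplus>\<^bsub>M\<^esub> b \<ominus>\<^bsub>M\<^esub> c) = r \<odot>\<^bsub>M\<^esub> a \<oplus>\<^bsub>M\<^esub> r \<odot>\<^bsub>M\<^esub> b \<ominus>\<^bsub>M\<^esub> r \<odot>\<^bsub>M\<^esub> c"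
proof -
  have ag: "abelian_group M" using rm unfolding ring_module_def by auto
  interpret abelian_group M by (rule ag)
  have cl: "\<And>x. x \<in> carrier M \<Longrightarrow> r \<odot>\<^bsub>M\<^esub> x \<in> carrier M" using rm r unfolding ring_module_def by auto
  have dist: "\<And>x y. x \<in> carrier M \<Longrightarrow> y \<in> carrier M \<Longrightarrow> r \<odot>\<^bsub>M\<^esub> (x \<oplus>\<^bsub>M\<^esub> y) = r \<odot>\<^bsub>M\<^esub> x \<oplus>\<^bsub>M\<^esub> r \<odot>\<^bsub>M\<^esub> y"
    using rm r unfolding ring_module_def by auto
  have "r \<odot>\<^bsub>M\<^esub> \<zero>\<^bsub>M\<^esub> \<oplus>\<^bsub>M\<^esub> \<zero>\<^bsub>M\<^esub> = r \<odot>\<^bsub>M\<^esub> \<zero>\<^bsub>M\<^esub> \<oplus>\<^bsub>M\<^esub> r \<odot>\<^bsub>M\<^esub> \<zero>\<^bsub>M\<^esub>"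
    using dist[of "\<zero>\<^bsub>M\<^esub>" "\<zero>\<^bsub>M\<^esub>"] cl[of "\<zero>\<^bsub>M\<^esub>"] by simp
  then have z: "r \<odot>\<^bsub>M\<^esub> \<zero>\<^bsub>M\<^esub> = \<zero>\<^bsub>M\<^esub>"
    using cl[of "\<zero>\<^bsub>M\<^esub>"] by (metis add.l_cancel_one' r_zero zero_closed)
  have "r \<odot>\<^bsub>M\<^esub> (\<ominus>\<^bsub>M\<^esub> c) \<oplus>\<^bsub>M\<^esub> r \<odot>\<^bsub>M\<^esub> c = \<zero>\<^bsub>M\<^esub>"
    using dist[of "\<ominus>\<^bsub>M\<^esub> c" c] abc z by (simp add: l_neg)
  then have n: "r \<odot>\<^bsub>M\<^esub> (\<ominus>\<^bsub>M\<^esub> c) = \<ominus>\<^bsub>M\<^esub> (r \<odot>\<^bsub>M\<^esub> c)"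
    using cl abc by (metis minus_equality a_inv_closed)
  show ?thesis using abc cl dist n by (simp add: a_minus_def)
qed

definition aff :: "('r, 'c) ring_scheme \<Rightarrow> ('r, 'a, 'd) module_scheme \<Rightarrow> nat \<Rightarrow> ('a list \<Rightarrow> 'a) \<Rightarrow> bool" where
  "aff R M m p \<longleftrightarrow> (\<forall>xs\<in>pow_carrier (carrier M) m. p xs \<in> carrier M) \<and>
     (\<forall>xs\<in>pow_carrier (carrier M) m. \<forall>ys\<in>pow_carrier (carrier M) m.
        p (vadd M xs ys) = p xs \<oplus>\<^bsub>M\<^esub> p ys \<ominus>\<^bsub>M\<^esub> p (replicate m \<zero>\<^bsub>M\<^esub>))"

lemma len2: "length gs = 2 \<Longrightarrow> \<exists>a b. gs = [a,b]"
  by (metis One_nat_def length_0_conv length_Suc_conv numeral_2_eq_2)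
lemma len1: "length gs = 1 \<Longrightarrow> \<exists>a. gs = [a]"
  by (metis One_nat_def length_0_conv length_Suc_conv)

lemma module_ops_cases:
  assumes "(k, f) \<in> module_ops R M"
  obtains "k = 2" "f = (\<lambda>xs. xs ! 0 \<oplus>\<^bsub>M\<^esub> xs ! 1)"
  | "k = 1" "f = (\<lambda>xs. \<ominus>\<^bsub>M\<^esub> (xs ! 0))"
  | "k = 0" "f = (\<lambda>xs. \<zero>\<^bsub>M\<^esub>)"
  | r where "r \<in> carrier R" "k = 1" "f = (\<lambda>xs. r \<odot>\<^bsub>M\<^esub> (xs ! 0))"
  using assms unfolding module_ops_def by auto

lemma pc_mem: "xs \<in> pow_carrier A m \<Longrightarrow> i < m \<Longrightarrow> xs!i \<in> A"
  unfolding pow_carrier_def by auto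

lemma vadd_pc: "xs \<in> pow_carrier (carrier M) m \<Longrightarrow> ys \<in> pow_carrier (carrier M) m \<Longrightarrow> abelian_group M \<Longrightarrow>
   vadd M xs ys \<in> pow_carrier (carrier M) m"
proof -
  assume a: "xs \<in> pow_carrier (carrier M) m" "ys \<in> pow_carrier (carrier M) m" "abelian_group M"
  then have l: "length xs = m" "length ys = m" unfolding pow_carrier_def by auto
  have "vadd M xs ys ! i \<in> carrier M" if "i < m" for i
    using vadd_nth[of i xs ys M] l that pc_mem[OF a(1) that] pc_mem[OF a(2) that] abelian_group.a_closed'[OF a(3)] by simp
  then show ?thesis using l unfolding pow_carrier_def by (auto simp: vadd_len in_set_conv_nth)
qed

lemma Pol_mod_aff:
  assumes rm: "ring_module R M"
  shows "p \<in> Pol (carrier M) (module_ops R M) m \<Longrightarrow> aff R M m p"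
proof (induction rule: Pol.induct)
  have ag: "abelian_group M" using rm unfolding ring_module_def by auto
  {
  case (proj i)
  show ?case unfolding aff_def
  proof (intro conjI ballI)
    fix xs assume "xs \<in> pow_carrier (carrier M) m" then show "xs!i \<in> carrier M" using pc_mem proj by blast
  next
    fix xs ys assume xs: "xs \<in> pow_carrier (carrier M) m" and ys: "ys \<in> pow_carrier (carrier M) m"
    then have "length xs = m" "length ys = m" unfolding pow_carrier_def by auto
    then have "vadd M xs ys ! i = xs!i \<oplus>\<^bsub>M\<^esub> ys!i" using proj by (intro vadd_nth) auto
    then show "vadd M xs ys ! i = xs ! i \<oplus>\<^bsub>M\<^esub> ys ! i \<ominus>\<^bsub>M\<^esub> replicate m \<zero>\<^bsub>M\<^esub> ! i"
      using vadd_nth proj abelian_group.id_proj[OF ag] pc_mem[OF xs proj] pc_mem[OF ys proj] by simp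
  qed
  }
next
  have ag: "abelian_group M" using rm unfolding ring_module_def by auto
  {
  case (const c)
  then show ?case unfolding aff_def using abelian_group.id_const[OF ag] by simp
  }
next
  have ag: "abelian_group M" using rm unfolding ring_module_def by auto
  {
  case (comp k f gs)
  let ?o = "replicate m \<zero>\<^bsub>M\<^esub>"
  have o: "?o \<in> pow_carrier (carrier M) m" unfolding pow_carrier_def using abelian_group.zero_closed'[OF ag] by auto
  have IH: "\<And>g. g \<in> set gs \<Longrightarrow> aff R M m g" using comp(3) by auto
  from comp(1) show ?case
  proof (cases rule: module_ops_cases)
    case 1
    then obtain g1 g2 where gs: "gs = [g1,g2]" using len2 comp(2) by blast
    have a1: "aff R M m g1" and a2: "aff R M m g2" using IH gs by auto
    show ?thesis unfolding aff_def 1 gs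
    proof (intro conjI ballI)
      fix xs assume "xs \<in> pow_carrier (carrier M) m"
      then show "(\<lambda>xs. xs ! 0 \<oplus>\<^bsub>M\<^esub> xs ! 1) (map (\<lambda>g. g xs) [g1, g2]) \<in> carrier M"
        using a1 a2 abelian_group.a_closed'[OF ag] unfolding aff_def by simp
    next
      fix xs ys assume xs: "xs \<in> pow_carrier (carrier M) m" and ys: "ys \<in> pow_carrier (carrier M) m"
      show "(\<lambda>xs. xs ! 0 \<oplus>\<^bsub>M\<^esub> xs ! 1) (map (\<lambda>g. g (vadd M xs ys)) [g1, g2]) =
          (\<lambda>xs. xs ! 0 \<oplus>\<^bsub>M\<^esub> xs ! 1) (map (\<lambda>g. g xs) [g1, g2]) \<oplus>\<^bsub>M\<^esub>
          (\<lambda>xs. xs ! 0 \<oplus>\<^bsub>M\<^esub> xs ! 1) (map (\<lambda>g. g ys) [g1, g2]) \<ominus>\<^bsub>M\<^esub>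
          (\<lambda>xs. xs ! 0 \<oplus>\<^bsub>M\<^esub> xs ! 1) (map (\<lambda>g. g ?o) [g1, g2])"
        using a1 a2 xs ys o abelian_group.id_plus[OF ag] unfolding aff_def by simp
    qed
  next
    case 2
    then obtain g1 where gs: "gs = [g1]" using len1 comp(2) by blast
    have a1: "aff R M m g1" using IH gs by auto
    show ?thesis unfolding aff_def 2 gs
      using a1 o abelian_group.id_neg[OF ag] abelian_group.a_inv_closed[OF ag] unfolding aff_def by simp
  next
    case 3
    then show ?thesis unfolding aff_def using abelian_group.id_zero[OF ag] abelian_group.zero_closed'[OF ag] by simp
  next
    case (4 r)
    then obtain g1 where gs: "gs = [g1]" using len1 comp(2) by blast
    have a1: "aff R M m g1" using IH gs by auto
    have cl: "\<And>x. x \<in> carrier M \<Longrightarrow> r \<odot>\<^bsub>M\<^esub> x \<in> carrier M" using rm 4 unfolding ring_module_def by auto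
    show ?thesis unfolding aff_def 4 gs
      using a1 o cl smult_aff[OF rm 4(1)] unfolding aff_def by simp
  qed
  }
qed



lemma mal_pol:
  "\<exists>q \<in> Pol A (module_ops R M) 3. \<forall>a b d. q [a,b,d] = a \<oplus>\<^bsub>M\<^esub> \<ominus>\<^bsub>M\<^esub> b \<oplus>\<^bsub>M\<^esub> d"
proof -
  let ?G = "module_ops R M"
  have pl: "(2, \<lambda>xs. xs ! 0 \<oplus>\<^bsub>M\<^esub> xs ! 1) \<in> ?G" and ng: "(1, \<lambda>xs. \<ominus>\<^bsub>M\<^esub> (xs ! 0)) \<in> ?G"
    by (simp_all add: module_ops_def)
  have p0: "(\<lambda>xs. xs!0) \<in> Pol A ?G 3" and p1: "(\<lambda>xs. xs!1) \<in> Pol A ?G 3" and p2: "(\<lambda>xs. xs!2) \<in> Pol A ?G 3"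
    by (auto intro: Pol.proj)
  have "(\<lambda>xs. (\<lambda>ys. \<ominus>\<^bsub>M\<^esub> (ys ! 0)) (map (\<lambda>g. g xs) [\<lambda>xs. xs!1])) \<in> Pol A ?G 3"
    by (rule Pol.comp[OF ng]) (use p1 in auto)
  then have h1: "(\<lambda>xs. \<ominus>\<^bsub>M\<^esub> (xs ! 1)) \<in> Pol A ?G 3" by simp
  have "(\<lambda>xs. (\<lambda>ys. ys ! 0 \<oplus>\<^bsub>M\<^esub> ys ! 1) (map (\<lambda>g. g xs) [\<lambda>xs. xs!0, \<lambda>xs. \<ominus>\<^bsub>M\<^esub> (xs ! 1)])) \<in> Pol A ?G 3"
    by (rule Pol.comp[OF pl]) (use p0 h1 in auto)
  then have h2: "(\<lambda>xs. xs!0 \<oplus>\<^bsub>M\<^esub> \<ominus>\<^bsub>M\<^esub> (xs ! 1)) \<in> Pol A ?G 3" by simp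
  have "(\<lambda>xs. (\<lambda>ys. ys ! 0 \<oplus>\<^bsub>M\<^esub> ys ! 1) (map (\<lambda>g. g xs) [\<lambda>xs. xs!0 \<oplus>\<^bsub>M\<^esub> \<ominus>\<^bsub>M\<^esub> (xs ! 1), \<lambda>xs. xs!2])) \<in> Pol A ?G 3"
    by (rule Pol.comp[OF pl]) (use p2 h2 in auto)
  then have "(\<lambda>xs. xs!0 \<oplus>\<^bsub>M\<^esub> \<ominus>\<^bsub>M\<^esub> (xs ! 1) \<oplus>\<^bsub>M\<^esub> xs!2) \<in> Pol A ?G 3" by simp
  then show ?thesis by (intro bexI[of _ "(\<lambda>xs. xs!0 \<oplus>\<^bsub>M\<^esub> \<ominus>\<^bsub>M\<^esub> (xs ! 1) \<oplus>\<^bsub>M\<^esub> xs!2)"]) simp_all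
qed

lemma (in abelian_group) mal_id:
  "a \<in> carrier G \<Longrightarrow> b \<in> carrier G \<Longrightarrow> a \<oplus> \<ominus> b \<oplus> b = a \<and> b \<oplus> \<ominus> b \<oplus> a = a"
  by (simp add: a_assoc l_neg r_neg)

lemma malcev_term:
  assumes affine: "poly_equiv_to_module A F R M"
  shows "\<exists>p \<in> Pol A F 3. \<forall>a\<in>A. \<forall>b\<in>A. p [a,b,b] = a \<and> p [b,b,a] = a"
proof -
  from affine have rm: "ring_module R M" and cM: "carrier M = A" and pe: "poly_equivalent A F (module_ops R M)"
    unfolding poly_equiv_to_module_def by auto
  then have ag: "abelian_group M" unfolding ring_module_def by auto
  obtain q where q: "q \<in> Pol A (module_ops R M) 3" "\<And>a b d. q [a,b,d] = a \<oplus>\<^bsub>M\<^esub> \<ominus>\<^bsub>M\<^esub> b \<oplus>\<^bsub>M\<^esub> d"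
    using mal_pol by blast
  from pe have "restrict q (pow_carrier A 3) \<in> (\<lambda>p. restrict p (pow_carrier A 3)) ` Pol A F 3"
    unfolding poly_equivalent_def using q(1) by blast
  then obtain p where p: "p \<in> Pol A F 3" and pq: "restrict p (pow_carrier A 3) = restrict q (pow_carrier A 3)" by auto
  have ev: "p xs = q xs" if "xs \<in> pow_carrier A 3" for xs using pq that by (metis restrict_apply')
  show ?thesis
  proof (intro bexI[OF _ p] ballI conjI)
    fix a b assume ab: "a \<in> A" "b \<in> A"
    have "[a,b,b] \<in> pow_carrier A 3" "[b,b,a] \<in> pow_carrier A 3" using ab unfolding pow_carrier_def by auto
    then have "p [a,b,b] = a \<oplus>\<^bsub>M\<^esub> \<ominus>\<^bsub>M\<^esub> b \<oplus>\<^bsub>M\<^esub> b" "p [b,b,a] = b \<oplus>\<^bsub>M\<^esub> \<ominus>\<^bsub>M\<^esub> b \<oplus>\<^bsub>M\<^esub> a"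
      using ev q(2) by auto
    moreover have "a \<oplus>\<^bsub>M\<^esub> \<ominus>\<^bsub>M\<^esub> b \<oplus>\<^bsub>M\<^esub> b = a" "b \<oplus>\<^bsub>M\<^esub> \<ominus>\<^bsub>M\<^esub> b \<oplus>\<^bsub>M\<^esub> a = a"
      using ab cM abelian_group.mal_id[OF ag] by auto
    ultimately show "p [a,b,b] = a" "p [b,b,a] = a" by auto
  qed
qed



definition phi :: "nat \<Rightarrow> nat \<Rightarrow> 'a list \<Rightarrow> 'a list" where
  "phi i n v = map (\<lambda>j. if j = i then v!0 else v!1) [0..<n]"

lemma phi_hom: "phi i n (map (\<lambda>l. f (map (\<lambda>v. v!l) args)) [0..<2]) = map (\<lambda>j. f (map (\<lambda>v. v!j) (map (phi i n) args))) [0..<n]"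
  unfolding phi_def by (rule map_cong) (auto simp: comp_def)

lemma upper:
  assumes alg: "is_algebra A F"
    and affine: "poly_equiv_to_module A F R M"
    and fg2: "finitely_generated (pow_carrier A 2) (pow_ops F 2)"
  shows "\<exists>K. \<forall>n\<ge>1. \<exists>X. finite X \<and> card X \<le> K * n \<and> generates (pow_carrier A n) (pow_ops F n) X"
proof -
  obtain G where G: "finite G" "G \<subseteq> pow_carrier A 2" "Sg (pow_ops F 2) G = pow_carrier A 2"
    using fg2 unfolding finitely_generated_def generates_def by auto
  obtain c where c: "c \<in> A" using alg unfolding is_algebra_def by auto
  obtain p where p: "p \<in> Pol A F 3" "\<And>a b. a\<in>A \<Longrightarrow> b\<in>A \<Longrightarrow> p [a,b,b] = a \<and> p [b,b,a] = a"
    using malcev_term[OF affine] by blast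
  show ?thesis
  proof (rule exI[of _ "card G"], intro allI impI)
    fix n :: nat assume n: "n \<ge> 1"
    define X where "X = (\<Union>i<n. phi i n ` G)"
    have fX: "finite X" unfolding X_def using G(1) by auto
    have "card X \<le> (\<Sum>i<n. card (phi i n ` G))" unfolding X_def by (rule card_UN_le) simp
    also have "\<dots> \<le> (\<Sum>i<n. card G)" by (rule sum_mono) (rule card_image_le[OF G(1)])
    also have "\<dots> = card G * n" by simp
    finally have cX: "card X \<le> card G * n" .
    have phic: "phi i n v \<in> pow_carrier A n" if "v \<in> pow_carrier A 2" for i v
    proof -
      have "v!0 \<in> A" "v!1 \<in> A" using that unfolding pow_carrier_def by auto
      then show ?thesis unfolding phi_def pow_carrier_def by auto
    qed
    have XA: "X \<subseteq> pow_carrier A n" unfolding X_def using G(2) phic by auto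
    let ?S = "Sg (pow_ops F n) X"
    have phiS: "phi i n [a,b] \<in> ?S" if "i < n" "a \<in> A" "b \<in> A" for i a b
    proof -
      have "[a,b] \<in> Sg (pow_ops F 2) G" using G(3) that unfolding pow_carrier_def by auto
      then have "phi i n [a,b] \<in> Sg (pow_ops F n) (phi i n ` G)"
        by (rule Sg_hom[where h="phi i n", OF phi_hom])
      then show ?thesis by (rule Sg_mono) (use that in \<open>auto simp: X_def\<close>)
    qed
    have diag: "replicate n a \<in> ?S" if "a \<in> A" for a
    proof -
      have "phi 0 n [a,a] = replicate n a" unfolding phi_def by (rule nth_equalityI) auto
      then show ?thesis using phiS[of 0 a a] n that by simp
    qed
    have "pow_carrier A n \<subseteq> ?S"
    proof
      fix y assume y: "y \<in> pow_carrier A n"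
      then have ly: "length y = n" and yA: "\<And>l. l < n \<Longrightarrow> y!l \<in> A" unfolding pow_carrier_def by auto
      define z where "z j = map (\<lambda>l. if l < j then y!l else c) [0..<n]" for j
      have "j \<le> n \<longrightarrow> z j \<in> ?S" for j
      proof (induction j)
        case 0
        have "z 0 = replicate n c" unfolding z_def by (rule nth_equalityI) auto
        then show ?case using diag[OF c] by simp
      next
        case (Suc j)
        show ?case
        proof
          assume j: "Suc j \<le> n"
          let ?vs = "[z j, replicate n c, phi j n [y!j, c]]"
          have SS: "map (\<lambda>l. p (map (\<lambda>v. v!l) ?vs)) [0..<n] \<in> ?S"
            by (rule Pol_closed[OF alg XA diag p(1)]) (use Suc j phiS yA c diag in auto)
          have EQ: "map (\<lambda>l. p (map (\<lambda>v. v!l) ?vs)) [0..<n] = map (\<lambda>l. if l < Suc j then y!l else c) [0..<n]"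
          proof (rule map_cong)
            fix l assume "l \<in> set [0..<n]"
            then have l: "l < n" by simp
            have "map (\<lambda>v. v!l) ?vs = [if l < j then y!l else c, c, if l = j then y!j else c]"
              using l by (simp add: z_def phi_def)
            then show "p (map (\<lambda>v. v!l) ?vs) = (if l < Suc j then y!l else c)"
            proof (cases "l < j")
              case True then show ?thesis using \<open>map (\<lambda>v. v!l) ?vs = _\<close> p(2)[OF yA[OF l] c] by simp
            next
              case False
              show ?thesis
              proof (cases "l = j")
                case True then show ?thesis using \<open>map (\<lambda>v. v!l) ?vs = _\<close> p(2)[OF yA[OF l] c] by simp
              next
                case False then show ?thesis using \<open>\<not> l < j\<close> \<open>map (\<lambda>v. v!l) ?vs = _\<close> p(2)[OF c c] by simp
              qed
            qed
          qed simp
          have "z (Suc j) = map (\<lambda>l. if l < Suc j then y!l else c) [0..<n]" by (simp add: z_def)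
          then show "z (Suc j) \<in> ?S" using SS unfolding EQ by simp
        qed
      qed
      moreover have "z n = y" unfolding z_def using ly by (intro nth_equalityI) auto
      ultimately show "y \<in> ?S" by auto
    qed
    then have "generates (pow_carrier A n) (pow_ops F n) X"
      unfolding generates_def using XA Sg_carrier[OF alg XA] by auto
    then show "\<exists>X. finite X \<and> card X \<le> card G * n \<and> generates (pow_carrier A n) (pow_ops F n) X"
      using fX cX by blast
  qed
qed



definition E :: "('a, 'm) ring_scheme \<Rightarrow> nat \<Rightarrow> nat \<Rightarrow> 'a \<Rightarrow> 'a list" where
  "E M m i a = map (\<lambda>l. if l = i then a else \<zero>\<^bsub>M\<^esub>) [0..<m]"

lemma E_pc: "abelian_group M \<Longrightarrow> a \<in> carrier M \<Longrightarrow> E M m i a \<in> pow_carrier (carrier M) m"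
  unfolding E_def pow_carrier_def using abelian_group.zero_closed'[of M] by auto

lemma aff_det:
  assumes ag: "abelian_group M" and a1: "aff R M m p" and a2: "aff R M m p'"
    and e: "\<And>i a. i < m \<Longrightarrow> a \<in> carrier M \<Longrightarrow> p (E M m i a) = p' (E M m i a)"
    and o: "p (replicate m \<zero>\<^bsub>M\<^esub>) = p' (replicate m \<zero>\<^bsub>M\<^esub>)"
    and xs: "xs \<in> pow_carrier (carrier M) m"
  shows "p xs = p' xs"
proof -
  have lx: "length xs = m" and xc: "\<And>l. l < m \<Longrightarrow> xs!l \<in> carrier M" using xs pc_mem unfolding pow_carrier_def by auto
  have zc: "\<zero>\<^bsub>M\<^esub> \<in> carrier M" using abelian_group.zero_closed'[OF ag] .
  define z where "z j = map (\<lambda>l. if l < j then xs!l else \<zero>\<^bsub>M\<^esub>) [0..<m]" for j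
  have zpc: "z j \<in> pow_carrier (carrier M) m" for j
    unfolding z_def pow_carrier_def using xc zc by auto
  have "j \<le> m \<longrightarrow> p (z j) = p' (z j)" for j
  proof (induction j)
    case 0
    have "z 0 = replicate m \<zero>\<^bsub>M\<^esub>" unfolding z_def by (rule nth_equalityI) auto
    then show ?case using o by simp
  next
    case (Suc j)
    show ?case
    proof
      assume j: "Suc j \<le> m"
      have Ej: "E M m j (xs!j) \<in> pow_carrier (carrier M) m" using E_pc[OF ag xc] j by simp
      have "z (Suc j) = vadd M (z j) (E M m j (xs!j))"
      proof (rule nth_equalityI)
        show "length (z (Suc j)) = length (vadd M (z j) (E M m j (xs!j)))"
          unfolding z_def E_def by (simp add: vadd_len)
      next
        fix l assume "l < length (z (Suc j))"
        then have l: "l < m" unfolding z_def by simp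
        have "vadd M (z j) (E M m j (xs!j)) ! l = z j ! l \<oplus>\<^bsub>M\<^esub> E M m j (xs!j) ! l"
          by (rule vadd_nth) (use l in \<open>simp_all add: z_def E_def\<close>)
        also have "\<dots> = z (Suc j) ! l"
          using l xc[OF l] xc[of j] j zc unfolding z_def E_def
          using abelian_group.axioms(1)[OF ag] abelian_monoid.l_zero abelian_monoid.r_zero
          by (cases "l < j"; cases "l = j") auto
        finally show "z (Suc j) ! l = vadd M (z j) (E M m j (xs!j)) ! l" by simp
      qed
      moreover have "p (vadd M (z j) (E M m j (xs!j))) = p' (vadd M (z j) (E M m j (xs!j)))"
        using a1 a2 zpc[of j] Ej Suc j e[of j "xs!j"] xc[of j] o unfolding aff_def by simp
      ultimately show "p (z (Suc j)) = p' (z (Suc j))" by simp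
    qed
  qed
  moreover have "z m = xs" unfolding z_def using lx by (intro nth_equalityI) auto
  ultimately show ?thesis by auto
qed

lemma count_pol:
  fixes m :: nat and M :: "('r, 'a, 'd) module_scheme"
  assumes rm: "ring_module R M" and fin: "finite (carrier M)"
  defines "Q \<equiv> (\<lambda>p. restrict p (pow_carrier (carrier M) m)) ` Pol (carrier M) (module_ops R M) m"
  shows "finite Q \<and> card Q \<le> card (carrier M) ^ (m * card (carrier M)) * card (carrier M)"
proof -
  have ag: "abelian_group M" using rm unfolding ring_module_def by auto
  let ?A = "carrier M"
  let ?pc = "pow_carrier ?A m"
  define key where "key q = (restrict (\<lambda>(i,a). q (E M m i a)) ({..<m} \<times> ?A), q (replicate m \<zero>\<^bsub>M\<^esub>))" for q :: "'a list \<Rightarrow> 'a"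
  let ?T = "(PiE ({..<m} \<times> ?A) (\<lambda>_. ?A)) \<times> ?A"
  have opc: "replicate m \<zero>\<^bsub>M\<^esub> \<in> ?pc" unfolding pow_carrier_def using abelian_group.zero_closed'[OF ag] by auto
  have img: "key ` Q \<subseteq> ?T"
  proof
    fix k assume "k \<in> key ` Q"
    then obtain p where p: "p \<in> Pol ?A (module_ops R M) m" and k: "k = key (restrict p ?pc)" unfolding Q_def by auto
    have ap: "aff R M m p" by (rule Pol_mod_aff[OF rm p])
    show "k \<in> ?T" unfolding k key_def using ap opc E_pc[OF ag] unfolding aff_def by auto
  qed
  have inj: "inj_on key Q"
  proof
    fix q1 q2 assume q1: "q1 \<in> Q" and q2: "q2 \<in> Q" and eq: "key q1 = key q2"
    obtain p1 where p1: "p1 \<in> Pol ?A (module_ops R M) m" "q1 = restrict p1 ?pc" using q1 unfolding Q_def by auto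
    obtain p2 where p2: "p2 \<in> Pol ?A (module_ops R M) m" "q2 = restrict p2 ?pc" using q2 unfolding Q_def by auto
    have "p1 xs = p2 xs" if "xs \<in> ?pc" for xs
    proof (rule aff_det[OF ag Pol_mod_aff[OF rm p1(1)] Pol_mod_aff[OF rm p2(1)] _ _ that])
      fix i a assume ia: "i < m" "a \<in> ?A"
      have "restrict (\<lambda>(i,a). q1 (E M m i a)) ({..<m} \<times> ?A) (i,a) = restrict (\<lambda>(i,a). q2 (E M m i a)) ({..<m} \<times> ?A) (i,a)"
        using eq unfolding key_def by simp
      then show "p1 (E M m i a) = p2 (E M m i a)" using ia E_pc[OF ag ia(2)] p1(2) p2(2) by simp
    next
      show "p1 (replicate m \<zero>\<^bsub>M\<^esub>) = p2 (replicate m \<zero>\<^bsub>M\<^esub>)" using eq opc p1(2) p2(2) unfolding key_def by simp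
    qed
    then show "q1 = q2" unfolding p1(2) p2(2) by (intro ext) simp
  qed
  have finT: "finite ?T" using fin by (simp add: finite_PiE)
  have cT: "card ?T = card ?A ^ (m * card ?A) * card ?A"
    using fin by (simp add: card_PiE card_cartesian_product)
  have "finite (key ` Q)" using finT img finite_subset by blast
  then have fQ: "finite Q" using inj finite_imageD by blast
  have "card Q = card (key ` Q)" using inj card_image by fastforce
  also have "\<dots> \<le> card ?T" using img finT card_mono by blast
  finally show ?thesis using fQ cT by simp
qed

lemma Sg_rep:
  assumes len: "\<forall>x\<in>set xs. length x = n"
  shows "s \<in> Sg (pow_ops F n) (set xs) \<Longrightarrow> \<exists>p\<in>Pol A F (length xs). s = map (\<lambda>j. p (map (\<lambda>x. x!j) xs)) [0..<n]"
proof (induction rule: Sg.induct)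
  case (gen x)
  then obtain i where i: "i < length xs" "x = xs!i" by (auto simp: in_set_conv_nth)
  have "map (\<lambda>j. (map (\<lambda>x. x!j) xs)!i) [0..<n] = x"
    using i len by (intro nth_equalityI) auto
  then show ?case using Pol.proj[OF i(1)] by (intro bexI[of _ "\<lambda>ys. ys!i"]) auto
next
  case (app k f' args)
  from app(1) obtain f where kf: "(k,f) \<in> F" and f': "f' = (\<lambda>args. map (\<lambda>i. f (map (\<lambda>v. v!i) args)) [0..<n])"
    by (rule pow_ops_E)
  let ?col = "\<lambda>j. map (\<lambda>x. x!j) xs"
  define P where "P v = (SOME p. p \<in> Pol A F (length xs) \<and> v = map (\<lambda>j. p (?col j)) [0..<n])" for v
  have P: "P v \<in> Pol A F (length xs) \<and> v = map (\<lambda>j. P v (?col j)) [0..<n]" if "v \<in> set args" for v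
  proof -
    have ex: "\<exists>p. p \<in> Pol A F (length xs) \<and> v = map (\<lambda>j. p (?col j)) [0..<n]" using app(3) that by blast
    show ?thesis unfolding P_def by (rule someI_ex[OF ex])
  qed
  let ?p = "\<lambda>ys. f (map (\<lambda>q. q ys) (map P args))"
  have pP: "?p \<in> Pol A F (length xs)"
    by (rule Pol.comp[OF kf]) (use app(2) P in auto)
  have "f' args = map (\<lambda>j. ?p (?col j)) [0..<n]"
    unfolding f'
  proof (rule map_cong)
    fix j assume "j \<in> set [0..<n]"
    then have j: "j < n" by simp
    have eqm: "map (\<lambda>v. v!j) args = map (\<lambda>q. q (?col j)) (map P args)"
      unfolding map_map comp_def
    proof (rule map_cong)
      fix v assume "v \<in> set args"
      then have "v = map (\<lambda>j. P v (?col j)) [0..<n]" using P by blast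
      then show "v!j = P v (?col j)" using j by (metis (no_types, lifting) add_0 diff_zero length_upt nth_map nth_upt)
    qed simp
    show "f (map (\<lambda>v. v!j) args) = ?p (?col j)" unfolding eqm by (rule refl)
  qed simp
  then show ?case using pP by (intro bexI[of _ ?p]) simp_all
qed



lemma lower:
  assumes alg: "is_algebra A F" and affine: "poly_equiv_to_module A F R M"
    and fin: "finite A" and c1: "card A > 1"
    and fX: "finite X" and gen: "generates (pow_carrier A n) (pow_ops F n) X"
  shows "n \<le> card A * card X + 1"
proof -
  from affine have rm: "ring_module R M" and cM: "carrier M = A" and pe: "poly_equivalent A F (module_ops R M)"
    unfolding poly_equiv_to_module_def by auto
  from gen have XA: "X \<subseteq> pow_carrier A n" and SX: "Sg (pow_ops F n) X = pow_carrier A n"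
    unfolding generates_def by auto
  obtain xs where xs: "set xs = X" "distinct xs" using finite_distinct_list[OF fX] by blast
  define m where "m = length xs"
  have mX: "m = card X" unfolding m_def using xs distinct_card by metis
  have len: "\<forall>x\<in>set xs. length x = n" using XA xs(1) unfolding pow_carrier_def by auto
  define Q where "Q = (\<lambda>p. restrict p (pow_carrier A m)) ` Pol A (module_ops R M) m"
  have QF: "(\<lambda>p. restrict p (pow_carrier A m)) ` Pol A F m = Q"
    using pe unfolding poly_equivalent_def Q_def by blast
  have cQ: "finite Q \<and> card Q \<le> card A ^ (m * card A) * card A"
    using count_pol[OF rm, of m] fin cM unfolding Q_def by simp
  define \<Phi> where "\<Phi> q = map (\<lambda>j. q (map (\<lambda>x. x!j) xs)) [0..<n]" for q :: "'a list \<Rightarrow> 'a"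
  have sub: "pow_carrier A n \<subseteq> \<Phi> ` Q"
  proof
    fix s assume "s \<in> pow_carrier A n"
    then have "s \<in> Sg (pow_ops F n) (set xs)" using SX xs(1) by simp
    then obtain p where p: "p \<in> Pol A F m" and s: "s = map (\<lambda>j. p (map (\<lambda>x. x!j) xs)) [0..<n]"
      using Sg_rep[OF len] unfolding m_def by blast
    have col: "map (\<lambda>x. x!j) xs \<in> pow_carrier A m" if "j < n" for j
      using XA xs(1) that unfolding pow_carrier_def m_def by (auto simp: subset_iff)
    have "s = \<Phi> (restrict p (pow_carrier A m))"
      unfolding s \<Phi>_def by (rule map_cong) (use col in auto)
    moreover have "restrict p (pow_carrier A m) \<in> Q" using p QF by blast
    ultimately show "s \<in> \<Phi> ` Q" by blast
  qed
  have "card (pow_carrier A n) \<le> card (\<Phi> ` Q)" using sub cQ by (intro card_mono) auto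
  also have "\<dots> \<le> card Q" using cQ by (intro card_image_le) auto
  also have "\<dots> \<le> card A ^ (m * card A) * card A" using cQ by simp
  finally have "card A ^ n \<le> card A ^ (m * card A + 1)"
    using card_lists_length_eq[OF fin, of n] unfolding pow_carrier_def by (simp add: conj_commute mult.commute)
  then have "n \<le> m * card A + 1" using c1 power_le_imp_le_exp by blast
  then show ?thesis using mX by (simp add: mult.commute)
qed

theorem theorem2p5:
  fixes A :: "'a set" and F :: "(nat \<times> ('a list \<Rightarrow> 'a)) set"
    and R :: "('r, 'c) ring_scheme" and M :: "('r, 'a, 'e) module_scheme"
  assumes alg: "is_algebra A F"
    and affine: "poly_equiv_to_module A F R M"
    and fg2: "finitely_generated (pow_carrier A 2) (pow_ops F 2)"
  shows "(\<forall>n. finitely_generated (pow_carrier A n) (pow_ops F n))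
         \<and> (\<lambda>n. real (d_gen A F n)) \<in> O(\<lambda>n. real n)
         \<and> (finite A \<and> card A > 1 \<longrightarrow> (\<lambda>n. real (d_gen A F n)) \<in> \<Theta>(\<lambda>n. real n))"
proof -
  obtain K where K: "\<And>n. n \<ge> 1 \<Longrightarrow> \<exists>X. finite X \<and> card X \<le> K * n \<and> generates (pow_carrier A n) (pow_ops F n) X"
    using upper[OF alg affine fg2] by blast
  have fg: "finitely_generated (pow_carrier A n) (pow_ops F n)" for n
  proof (cases "n = 0")
    case True
    have pc0: "pow_carrier A 0 = {[]}" unfolding pow_carrier_def by auto
    have "Sg (pow_ops F 0) {[]} \<subseteq> pow_carrier A 0"
      using Sg_carrier[OF alg, of "{[]}" 0] pc0 by auto
    moreover have "[] \<in> Sg (pow_ops F 0) {[]}" by (rule Sg.gen) simp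
    ultimately have "generates (pow_carrier A 0) (pow_ops F 0) {[]}" unfolding generates_def using pc0 by auto
    then show ?thesis using True unfolding finitely_generated_def by blast
  next
    case False
    then show ?thesis using K[of n] unfolding finitely_generated_def by auto
  qed
  have dle: "d_gen A F n \<le> K * n" if n1: "n \<ge> 1" for n
  proof -
    obtain X where X: "finite X" "card X \<le> K * n" "generates (pow_carrier A n) (pow_ops F n) X" using K[OF n1] by blast
    have "d_gen A F n \<le> card X" unfolding d_gen_def by (rule Least_le) (use X in blast)
    then show ?thesis using X by simp
  qed
  have bo: "(\<lambda>n. real (d_gen A F n)) \<in> O(\<lambda>n. real n)"
  proof (rule bigoI[where c="real K"])
    show "eventually (\<lambda>n. norm (real (d_gen A F n)) \<le> real K * norm (real n)) at_top"
      unfolding eventually_at_top_linorder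
    proof (intro exI allI impI)
      fix n :: nat assume "n \<ge> 1"
      then have "real (d_gen A F n) \<le> real (K * n)" using dle by (simp only: of_nat_le_iff)
      then show "norm (real (d_gen A F n)) \<le> real K * norm (real n)" by simp
    qed
  qed
  have th: "(\<lambda>n. real (d_gen A F n)) \<in> \<Theta>(\<lambda>n. real n)" if fin: "finite A" and c1: "card A > 1"
  proof (rule bigthetaI[OF bo])
    have lo: "n \<le> (card A + 1) * d_gen A F n" if "n \<ge> 2" for n
    proof -
      have ex: "\<exists>m X. finite X \<and> card X = m \<and> generates (pow_carrier A n) (pow_ops F n) X"
        using fg[of n] unfolding finitely_generated_def by blast
      have "\<exists>X. finite X \<and> card X = d_gen A F n \<and> generates (pow_carrier A n) (pow_ops F n) X"
        unfolding d_gen_def by (rule LeastI_ex) (use ex in blast)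
      then obtain X where X: "finite X" "card X = d_gen A F n" "generates (pow_carrier A n) (pow_ops F n) X" by blast
      have "n \<le> card A * d_gen A F n + 1" using lower[OF alg affine fin c1 X(1) X(3)] X(2) by simp
      moreover then have "d_gen A F n \<ge> 1" using that by (cases "d_gen A F n") auto
      ultimately show ?thesis by (simp add: algebra_simps)
    qed
    have "(\<lambda>n. real n) \<in> O(\<lambda>n. real (d_gen A F n))"
    proof (rule bigoI[where c="real (card A + 1)"])
      show "eventually (\<lambda>n. norm (real n) \<le> real (card A + 1) * norm (real (d_gen A F n))) at_top"
        unfolding eventually_at_top_linorder
      proof (intro exI allI impI)
        fix n :: nat assume "n \<ge> 2"
        then have "real n \<le> real ((card A + 1) * d_gen A F n)" using lo by (simp only: of_nat_le_iff)
        then show "norm (real n) \<le> real (card A + 1) * norm (real (d_gen A F n))" by (simp only: of_nat_mult norm_of_nat)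
      qed
    qed
    then show "(\<lambda>n. real (d_gen A F n)) \<in> \<Omega>(\<lambda>n. real n)" by (simp add: bigomega_iff_bigo)
  qed
  show ?thesis using fg bo th by blast
qed

end
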